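(* Let $S>0$, $K\ge2$, let $N_1,\dots,N_K$ be positive integers, and for $q\in\{1,\dots,K-1\}$ let $t_q$ be the unique solution in $t>1$ of $$t^2\ln t-(t^2-1)+\frac{t\sum_{k=1}^{q}N_k+N_{q+1}}{S+\sum_{k=1}^{K}N_k}(t-1)=0.$$ Then $t_q<t_{root}$ for all $q=1,\dots,K-1$, where $t_{root}\approx 2.21846$ is the larger root of the equation $t^2\ln t-(t^2-1)=0$. *)

theory Defs
  imports Complex_Main
begin

definition g_base :: "real \<Rightarrow> real" where
  "g_base t = t\<^sup>2 * ln t - (t\<^sup>2 - 1)"

definition t_root :: real where
  "t_root = (GREATEST r. r > 0 \<and> g_base r = 0)"

definition t_q :: "real \<Rightarrow> (nat \<Rightarrow> nat) \<Rightarrow> nat \<Rightarrow> nat \<Rightarrow> real" where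
  "t_q S N K q = (THE t. t > 1 \<and>
      g_base t + (t * (\<Sum>k=1..q. real (N k)) + real (N (q+1)))
                 / (S + (\<Sum>k=1..K. real (N k))) * (t - 1) = 0)"

end

theory Submission
  imports Defs
begin

lemma g_fun: "g_base = (\<lambda>t. t\<^sup>2 * ln t - (t\<^sup>2 - 1))"
  by (simp add: fun_eq_iff g_base_def)

lemma g_deriv: "t > 0 \<Longrightarrow> (g_base has_real_derivative t*(2*ln t - 1)) (at t)"
  unfolding g_fun
  by (auto intro!: derivative_eq_intros simp: field_simps power2_eq_square)

lemma g_one: "g_base 1 = 0" by (simp add: g_base_def)

lemma g_pos: assumes "0 < t" "t < 1" shows "g_base t > 0"
proof -
  obtain z where z: "t < z" "z < 1" "g_base 1 - g_base t = (1 - t) * (z*(2*ln z - 1))"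
    using MVT2[of t 1 g_base "\<lambda>z. z*(2*ln z - 1)"] assms g_deriv by auto
  have "ln z < 0" using z assms by simp
  hence "2*ln z - 1 < 0" by linarith
  hence "z*(2*ln z - 1) < 0" using z assms by (intro mult_pos_neg) auto
  hence "(1 - t) * (z*(2*ln z - 1)) < 0" using assms by (simp add: mult_pos_neg)
  thus ?thesis using z g_one by linarith
qed

lemma g_neg: assumes "1 < t" "t \<le> exp (1/2)" shows "g_base t < 0"
proof -
  obtain z where z: "1 < z" "z < t" "g_base t - g_base 1 = (t - 1) * (z*(2*ln z - 1))"
    using MVT2[of 1 t g_base "\<lambda>z. z*(2*ln z - 1)"] assms g_deriv by auto
  have "ln z < ln t" using z by simp
  also have "ln t \<le> 1/2" using assms by (metis ln_exp ln_le_cancel_iff exp_gt_zero less_trans zero_less_one)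
  finally have "z*(2*ln z - 1) < 0" using z by (simp add: mult_pos_neg)
  hence "(t - 1) * (z*(2*ln z - 1)) < 0" using assms by (simp add: mult_pos_neg)
  thus ?thesis using z g_one by linarith
qed

lemma g_inc: assumes "exp (1/2) \<le> s" "s < t" shows "g_base s < g_base t"
proof -
  have s0: "s > 0" using assms(1) exp_gt_zero[of "1/2"] by linarith
  obtain z where z: "s < z" "z < t" "g_base t - g_base s = (t - s) * (z*(2*ln z - 1))"
    using MVT2[of s t g_base "\<lambda>z. z*(2*ln z - 1)"] assms s0 g_deriv by auto
  have "1/2 \<le> ln s" using assms s0 by (metis ln_exp ln_le_cancel_iff exp_gt_zero)
  also have "ln s < ln z" using z s0 by simp
  finally have "z*(2*ln z - 1) > 0" using z s0 by simp
  hence "(t - s) * (z*(2*ln z - 1)) > 0" using assms by simp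
  thus ?thesis using z by linarith
qed

lemma e_half: "exp (1/2::real) > 1" "exp (1/2) < exp (1::real)" by auto

lemma root_ex: "\<exists>r. exp (1/2) < r \<and> g_base r = 0"
proof -
  have h1: "exp (1/2::real) \<ge> 3/2" using exp_ge_add_one_self[of "1/2::real"] by simp
  have "exp (1::real) = exp (1/2) * exp (1/2)" by (simp flip: exp_add)
  also have "\<dots> \<ge> 9/4" using h1 mult_mono[OF h1 h1] by simp
  finally have e2: "exp (1::real) \<ge> 9/4" .
  have ga: "g_base (exp (1/2)) < 0" using g_neg e_half by auto
  have gb: "g_base (exp 1) = 1" by (simp add: g_base_def)
  have "\<exists>x. exp (1/2) \<le> x \<and> x \<le> exp 1 \<and> g_base x = 0"
    apply (rule IVT) using ga gb e_half
    by (auto intro!: DERIV_isCont[OF g_deriv] simp: less_le_trans[of 0 "exp (1/2)"])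
  then obtain x where "exp (1/2) \<le> x" "g_base x = 0" by auto
  thus ?thesis using ga by (metis order.order_iff_strict order.irrefl)
qed

lemma troot: assumes "exp (1/2) < r" "g_base r = 0" shows "t_root = r"
  unfolding t_root_def
proof (rule Greatest_equality)
  show "r > 0 \<and> g_base r = 0" using assms exp_gt_zero[of "1/2::real"] by linarith
  fix y assume y: "y > 0 \<and> g_base y = 0"
  show "y \<le> r"
  proof (rule ccontr)
    assume "\<not> y \<le> r"
    hence "y > r" by simp
    hence "g_base r < g_base y" using g_inc[OF less_imp_le[OF assms(1)]] by simp
    thus False using y assms by simp
  qed
qed

theorem corollary1:
  fixes S :: real and K :: nat and N :: "nat \<Rightarrow> nat"
  assumes "S > 0" and "K \<ge> 2" and "\<And>k. k \<in> {1..K} \<Longrightarrow> N k > 0"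
  shows "\<forall>q \<in> {1..K-1}. t_q S N K q < t_root"
proof
  obtain r where r: "exp (1/2) < r" "g_base r = 0" using root_ex by blast
  have r1: "r > 1" using r e_half by linarith
  have tr: "t_root = r" using troot r by blast
  fix q assume q: "q \<in> {1..K-1}"
  define A where "A = (\<Sum>k=1..q. real (N k))"
  define B where "B = real (N (q+1))"
  define D where "D = S + (\<Sum>k=1..K. real (N k))"
  define h where "h = (\<lambda>t. g_base t + (t*A + B)/D*(t-1))"
  define h' where "h' = (\<lambda>t. t*(2*ln t - 1) + (2*A*t - A + B)/D)"
  have tq: "t_q S N K q = (THE t. t > 1 \<and> h t = 0)"
    by (simp add: t_q_def h_def A_def B_def D_def)
  have A0: "A \<ge> 0" unfolding A_def by (intro sum_nonneg) auto
  have B0: "B > 0" unfolding B_def using assms(3)[of "q+1"] q by auto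
  have AB: "A + B = (\<Sum>k=1..q+1. real (N k))" unfolding A_def B_def by simp
  also have "\<dots> \<le> (\<Sum>k=1..K. real (N k))"
    using q by (intro sum_mono2) auto
  finally have D: "D > A + B" unfolding D_def using assms(1) by linarith
  have Dp: "D > 0" using D A0 B0 by linarith
  have hd: "(h has_real_derivative h' t) (at t)" if "t > 0" for t
  proof -
    have "((\<lambda>t. (t*A + B)/D*(t-1)) has_real_derivative (2*A*t - A + B)/D) (at t)"
      using Dp by (auto intro!: derivative_eq_intros simp: field_simps)
    from DERIV_add[OF g_deriv[OF that] this] show ?thesis
      unfolding h_def h'_def by simp
  qed
  have hpos: "h t > 0" if "t \<ge> r" for t
  proof -
    have "g_base t \<ge> 0" using that r g_inc[of r t] less_imp_le[OF r(1)] by (cases "t = r") auto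
    moreover have "(t*A + B)/D*(t-1) > 0" using that r1 A0 B0 Dp
      by (intro mult_pos_pos divide_pos_pos) (auto intro: add_nonneg_pos)
    ultimately show ?thesis unfolding h_def by linarith
  qed
  have h1: "h 1 = 0" unfolding h_def by (simp add: g_one)
  have h'1: "h' 1 < 0" unfolding h'_def using D Dp by (simp add: field_simps)
  obtain d where d: "d > 0" "\<And>e. e > 0 \<Longrightarrow> e < d \<Longrightarrow> h (1 + e) < h 1"
    using DERIV_neg_dec_right[OF hd[of 1] h'1] by auto
  have ha: "h (1 + d/2) < 0" using d(2)[of "d/2"] d(1) h1 by simp
  have ar: "1 + d/2 < r" using hpos[of "1 + d/2"] ha by linarith
  have "\<exists>x. 1 + d/2 \<le> x \<and> x \<le> r \<and> h x = 0"
    apply (rule IVT) using ha hpos[of r] ar d(1)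
    by (auto intro!: DERIV_isCont[OF hd])
  then obtain t where t: "1 + d/2 \<le> t" "t \<le> r" "h t = 0" by auto
  have t1: "t > 1" using t d by linarith
  have tltr: "t < r" using t hpos[of r] by (cases "t = r") auto
  have mono: "h' s < h' u" if "1 \<le> s" "s < u" for s u
  proof -
    have "ln (s/u) \<le> s/u - 1" using that by (intro ln_le_minus_one) auto
    hence "ln s - ln u \<le> s/u - 1" using that by (simp add: ln_div)
    hence "u * (ln s - ln u) \<le> u * (s/u - 1)" using that by (intro mult_left_mono) auto
    moreover have "u * (s/u - 1) = s - u" using that by (simp add: field_simps)
    ultimately have k: "u * (ln s - ln u) \<le> s - u" by linarith
    have "ln s \<ge> 0" using that by simp
    hence "(u - s) * ln s \<ge> 0" using that by simp
    hence p: "u*(2*ln u - 1) - s*(2*ln s - 1) > 0" using k that by (simp add: algebra_simps)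
    have "(2*A*s - A + B)/D \<le> (2*A*u - A + B)/D" using A0 Dp that
      by (intro divide_right_mono) (auto intro: mult_left_mono)
    thus ?thesis unfolding h'_def using p by linarith
  qed
  have zero_h': "\<exists>z. a < z \<and> z < b \<and> h' z = 0" if ab0: "0 < a" "a < b" "h a = 0" "h b = 0" for a b
  proof -
    have "\<And>x. a \<le> x \<Longrightarrow> x \<le> b \<Longrightarrow> (h has_real_derivative h' x) (at x)"
      using hd ab0(1) by simp
    from MVT2[OF ab0(2) this] obtain z where "a < z" "z < b" "h b - h a = (b - a) * h' z"
      by blast
    thus ?thesis using ab0 by auto
  qed
  have uniq: "s = t" if "s > 1" "h s = 0" for s
  proof (rule ccontr)
    assume "s \<noteq> t"
    hence "\<exists>a b. 1 < a \<and> a < b \<and> h a = 0 \<and> h b = 0"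
    proof (cases "s < t")
      case True thus ?thesis using that t t1 by blast
    next
      case False thus ?thesis using that t t1 \<open>s \<noteq> t\<close> by (intro exI[of _ t] exI[of _ s]) auto
    qed
    then obtain a b where ab: "1 < a" "a < b" "h a = 0" "h b = 0" by blast
    obtain z1 where z1: "1 < z1" "z1 < a" "h' z1 = 0" using zero_h'[of 1 a] ab h1 by auto
    obtain z2 where z2: "a < z2" "z2 < b" "h' z2 = 0" using zero_h'[of a b] ab by auto
    show False using mono[of z1 z2] z1 z2 by simp
  qed
  have "t_q S N K q = t" unfolding tq
  proof (rule the_equality)
    show "t > 1 \<and> h t = 0" using t1 t(3) by simp
    fix x assume "x > 1 \<and> h x = 0"
    thus "x = t" using uniq by blast
  qed
  thus "t_q S N K q < t_root" using tltr tr by simp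
qed

end
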